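(* Let $(\mathcal{S},\mathcal{A},r,C,P,\mu,D)$ be a finite constrained Markov decision process with discount factor $\gamma\in[0,1)$, and let $P_m(s'|s,a)$ be a second (model) transition probability on the same finite state and action spaces. Let $\pi(a|s)$ and $\pi'(a|s)$ be arbitrary stochastic policies, and let $\Delta J(\pi,\pi') = J(\pi')-J(\pi)$ be the difference of their expected discounted returns under the true dynamics $P$. Then $$\frac{L^{\pi}_m(\pi')}{1-\gamma} - \frac{4\delta^{\max}\epsilon}{1-\gamma} \;\le\; \Delta J(\pi,\pi') \;\le\; \frac{L^{\pi}_m(\pi')}{1-\gamma} + \frac{4\delta^{\max}\epsilon}{1-\gamma},$$ where $$L^{\pi}_m(\pi') = \mathbb{E}_{s\sim d^{\pi}_m,\, a\sim\pi}\Big[\frac{\pi'(a|s)}{\pi(a|s)}A^{\pi}_m(s,a)\Big],\qquad \delta^{\max} = \max_{s,a,s'}\big|r(s,a,s')+\gamma V^{\pi}_m(s')-V^{\pi}_m(s)\big|,$$ $$\epsilon = \epsilon_\pi\epsilon_m + \frac{\gamma}{1-\gamma}\big(\epsilon_\pi^2 + 2\epsilon_\pi\epsilon_m\big),\quad \epsilon_\pi = \max_s D_{TV}\big(\pi'(\cdot|s)\,\|\,\pi(\cdot|s)\big),\quad \epsilon_m = \max_{s,a} D_{TV}\big(P(\cdot|s,a)\,\|\,P_m(\cdot|s,a)\big).$$ The same two-sided bound holds for the expected discounted cost returns of any cost function $c_i$, with $r$ replaced by $c_i$ throughout (i.e. $J$, $V^\pi_m$, $A^\pi_m$ replaced by $J_{c_i}$,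 $V^\pi_{m,c_i}$, $A^\pi_{m,c_i}$).
   Context: A finite CMDP $(\mathcal{S},\mathcal{A},r,C,P,\mu,D)$ has finite state space $\mathcal{S}$, finite action space $\mathcal{A}$, reward $r:\mathcal{S}\times\mathcal{A}\times\mathcal{S}\to\mathbb{R}$, a set $C$ of cost functions $c_i:\mathcal{S}\times\mathcal{A}\times\mathcal{S}\to\mathbb{R}$, transition probability $P(s'|s,a)$, start-state distribution $\mu$, and cost limits $D$. The start distribution $\mu$ is the same under $P$ and under the model $P_m$. For a policy $\pi$, $J(\pi)=\mathbb{E}_{\tau\sim(\pi,P)}[\sum_{t\ge0}\gamma^t r(s_t,a_t,s_{t+1})]$ with $s_0\sim\mu$, $a_t\sim\pi(\cdot|s_t)$, $s_{t+1}\sim P(\cdot|s_t,a_t)$; $J_{c_i}$ is defined analogously with $c_i$. Under model dynamics: $V^\pi_m(s)=\mathbb{E}_{\tau\sim(\pi,P_m)}[\sum_t\gamma^t r(s_t,a_t,s_{t+1})\mid s_0=s]$, $Q^\pi_m(s,a)$ the same conditioned additionally on $a_0=a$, and $A^\pi_m(s,a)=Q^\pi_m(s,a)-V^\pi_m(s)$; cost counterparts $V^\pi_{m,c_i}$, $A^\pi_{m,c_i}$ are defined with $c_i$ in place of $r$. The discounted model state distribution is $d^\pi_m(s)=(1-\gamma)\sum_{t\ge0}\gamma^t\Pr(S_t=s\mid \pi,P_m)$. The total variation distance is $D_{TV}(p\|q)=\frac12\sum_x|p(x)-q(x)|$. The importance-weighted expectation in $L^\pi_m(\pi')$ is understood as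 $\mathbb{E}_{s\sim d^\pi_m}[\sum_a \pi'(a|s)A^\pi_m(s,a)]$. *)

theory Defs
  imports "HOL-Analysis.Analysis"
begin

(* Policy  \<pi> :: 's => 'a => real,  \<pi> s a = \<pi>(a|s).
   Kernel  P  :: 's => 'a => 's => real,  P s a s' = P(s'|s,a). *)

definition is_dist :: "('x::finite \<Rightarrow> real) \<Rightarrow> bool" where
  "is_dist p \<longleftrightarrow> (\<forall>x. 0 \<le> p x) \<and> (\<Sum>x\<in>UNIV. p x) = 1"

definition is_policy :: "('s::finite \<Rightarrow> 'a::finite \<Rightarrow> real) \<Rightarrow> bool" where
  "is_policy \<pi> \<longleftrightarrow> (\<forall>s. is_dist (\<pi> s))"

definition is_kernel :: "('s::finite \<Rightarrow> 'a::finite \<Rightarrow> 's \<Rightarrow> real) \<Rightarrow> bool" where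
  "is_kernel P \<longleftrightarrow> (\<forall>s a. is_dist (P s a))"

text \<open>Joint law of (S_t, A_t) of the chain driven by policy \<pi> and kernel P,
  started from the joint law nu of (S_0, A_0).\<close>
fun sa_dist :: "('s::finite \<Rightarrow> 'a::finite \<Rightarrow> 's \<Rightarrow> real) \<Rightarrow> ('s \<Rightarrow> 'a \<Rightarrow> real)
    \<Rightarrow> ('s \<Rightarrow> 'a \<Rightarrow> real) \<Rightarrow> nat \<Rightarrow> 's \<Rightarrow> 'a \<Rightarrow> real" where
  "sa_dist P \<pi> nu 0 = nu"
| "sa_dist P \<pi> nu (Suc t) = (\<lambda>s' a'.
     (\<Sum>s\<in>UNIV. \<Sum>a\<in>UNIV. sa_dist P \<pi> nu t s a * P s a s') * \<pi> s' a')"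

definition disc_return :: "real \<Rightarrow> ('s::finite \<Rightarrow> 'a::finite \<Rightarrow> 's \<Rightarrow> real)
    \<Rightarrow> ('s \<Rightarrow> 'a \<Rightarrow> 's \<Rightarrow> real) \<Rightarrow> ('s \<Rightarrow> 'a \<Rightarrow> real) \<Rightarrow> ('s \<Rightarrow> 'a \<Rightarrow> real) \<Rightarrow> real" where
  "disc_return \<gamma> r P \<pi> nu =
     (\<Sum>t. \<gamma> ^ t * (\<Sum>s\<in>UNIV. \<Sum>a\<in>UNIV. sa_dist P \<pi> nu t s a *
                       (\<Sum>s'\<in>UNIV. P s a s' * r s a s')))"

definition J :: "real \<Rightarrow> ('s::finite \<Rightarrow> 'a::finite \<Rightarrow> 's \<Rightarrow> real)
    \<Rightarrow> ('s \<Rightarrow> 'a \<Rightarrow> 's \<Rightarrow> real) \<Rightarrow> ('s \<Rightarrow> real) \<Rightarrow> ('s \<Rightarrow> 'a \<Rightarrow> real) \<Rightarrow> real" where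
  "J \<gamma> r P \<mu> \<pi> = disc_return \<gamma> r P \<pi> (\<lambda>s a. \<mu> s * \<pi> s a)"

definition Vf :: "real \<Rightarrow> ('s::finite \<Rightarrow> 'a::finite \<Rightarrow> 's \<Rightarrow> real)
    \<Rightarrow> ('s \<Rightarrow> 'a \<Rightarrow> 's \<Rightarrow> real) \<Rightarrow> ('s \<Rightarrow> 'a \<Rightarrow> real) \<Rightarrow> 's \<Rightarrow> real" where
  "Vf \<gamma> r P \<pi> s0 = disc_return \<gamma> r P \<pi> (\<lambda>s a. (if s = s0 then 1 else 0) * \<pi> s a)"

definition Qf :: "real \<Rightarrow> ('s::finite \<Rightarrow> 'a::finite \<Rightarrow> 's \<Rightarrow> real)
    \<Rightarrow> ('s \<Rightarrow> 'a \<Rightarrow> 's \<Rightarrow> real) \<Rightarrow> ('s \<Rightarrow> 'a \<Rightarrow> real) \<Rightarrow> 's \<Rightarrow> 'a \<Rightarrow> real" where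
  "Qf \<gamma> r P \<pi> s0 a0 = disc_return \<gamma> r P \<pi> (\<lambda>s a. if s = s0 \<and> a = a0 then 1 else 0)"

definition Af :: "real \<Rightarrow> ('s::finite \<Rightarrow> 'a::finite \<Rightarrow> 's \<Rightarrow> real)
    \<Rightarrow> ('s \<Rightarrow> 'a \<Rightarrow> 's \<Rightarrow> real) \<Rightarrow> ('s \<Rightarrow> 'a \<Rightarrow> real) \<Rightarrow> 's \<Rightarrow> 'a \<Rightarrow> real" where
  "Af \<gamma> r P \<pi> s a = Qf \<gamma> r P \<pi> s a - Vf \<gamma> r P \<pi> s"

definition dstate :: "real \<Rightarrow> ('s::finite \<Rightarrow> 'a::finite \<Rightarrow> 's \<Rightarrow> real)
    \<Rightarrow> ('s \<Rightarrow> real) \<Rightarrow> ('s \<Rightarrow> 'a \<Rightarrow> real) \<Rightarrow> 's \<Rightarrow> real" where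
  "dstate \<gamma> P \<mu> \<pi> s = (1 - \<gamma>) *
     (\<Sum>t. \<gamma> ^ t * (\<Sum>a\<in>UNIV. sa_dist P \<pi> (\<lambda>s a. \<mu> s * \<pi> s a) t s a))"

definition Lsur :: "real \<Rightarrow> ('s::finite \<Rightarrow> 'a::finite \<Rightarrow> 's \<Rightarrow> real)
    \<Rightarrow> ('s \<Rightarrow> 'a \<Rightarrow> 's \<Rightarrow> real) \<Rightarrow> ('s \<Rightarrow> real) \<Rightarrow> ('s \<Rightarrow> 'a \<Rightarrow> real) \<Rightarrow> ('s \<Rightarrow> 'a \<Rightarrow> real) \<Rightarrow> real" where
  "Lsur \<gamma> r Pm \<mu> \<pi> \<pi>' =
     (\<Sum>s\<in>UNIV. dstate \<gamma> Pm \<mu> \<pi> s * (\<Sum>a\<in>UNIV. \<pi>' s a * Af \<gamma> r Pm \<pi> s a))"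

definition dTV :: "('x::finite \<Rightarrow> real) \<Rightarrow> ('x \<Rightarrow> real) \<Rightarrow> real" where
  "dTV p q = (1/2) * (\<Sum>x\<in>UNIV. \<bar>p x - q x\<bar>)"

definition delta_max :: "real \<Rightarrow> ('s::finite \<Rightarrow> 'a::finite \<Rightarrow> 's \<Rightarrow> real)
    \<Rightarrow> ('s \<Rightarrow> 'a \<Rightarrow> 's \<Rightarrow> real) \<Rightarrow> ('s \<Rightarrow> 'a \<Rightarrow> real) \<Rightarrow> real" where
  "delta_max \<gamma> r Pm \<pi> = Max {\<bar>r s a s' + \<gamma> * Vf \<gamma> r Pm \<pi> s' - Vf \<gamma> r Pm \<pi> s\<bar> | s a s'. True}"

definition eps_pi :: "('s::finite \<Rightarrow> 'a::finite \<Rightarrow> real) \<Rightarrow> ('s \<Rightarrow> 'a \<Rightarrow> real) \<Rightarrow> real" where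
  "eps_pi \<pi> \<pi>' = Max {dTV (\<pi>' s) (\<pi> s) | s. True}"

definition eps_m :: "('s::finite \<Rightarrow> 'a::finite \<Rightarrow> 's \<Rightarrow> real) \<Rightarrow> ('s \<Rightarrow> 'a \<Rightarrow> 's \<Rightarrow> real) \<Rightarrow> real" where
  "eps_m P Pm = Max {dTV (P s a) (Pm s a) | s a. True}"

definition eps_total :: "real \<Rightarrow> real \<Rightarrow> real \<Rightarrow> real" where
  "eps_total \<gamma> ep em = ep * em + \<gamma> / (1 - \<gamma>) * (ep\<^sup>2 + 2 * ep * em)"

end

theory Submission
  imports Defs
begin

definition Kp :: "('s::finite \<Rightarrow> 'a::finite \<Rightarrow> real) \<Rightarrow> ('s \<Rightarrow> 'a \<Rightarrow> 's \<Rightarrow> real) \<Rightarrow> 's \<Rightarrow> 's \<Rightarrow> real" where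
  "Kp \<rho> P s s' = (\<Sum>a\<in>UNIV. \<rho> s a * P s a s')"

fun mk :: "('s::finite \<Rightarrow> 's \<Rightarrow> real) \<Rightarrow> ('s \<Rightarrow> real) \<Rightarrow> nat \<Rightarrow> 's \<Rightarrow> real" where
  "mk K \<mu> 0 = \<mu>"
| "mk K \<mu> (Suc t) = (\<lambda>s'. \<Sum>s\<in>UNIV. mk K \<mu> t s * K s s')"

definition occ :: "real \<Rightarrow> ('s::finite \<Rightarrow> 's \<Rightarrow> real) \<Rightarrow> ('s \<Rightarrow> real) \<Rightarrow> ('s \<Rightarrow> real) \<Rightarrow> real" where
  "occ \<gamma> K \<mu> u = (\<Sum>t. \<gamma> ^ t * (\<Sum>s\<in>UNIV. mk K \<mu> t s * u s))"

definition stoch :: "('s::finite \<Rightarrow> 's \<Rightarrow> real) \<Rightarrow> bool" where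
  "stoch K \<longleftrightarrow> (\<forall>s s'. 0 \<le> K s s') \<and> (\<forall>s. (\<Sum>s'\<in>UNIV. K s s') = 1)"

definition ind :: "'s \<Rightarrow> 's \<Rightarrow> real" where
  "ind s0 s = (if s = s0 then 1 else 0)"

lemma stoch_Kp:
  assumes "is_policy \<rho>" "is_kernel P"
  shows "stoch (Kp \<rho> P)"
proof -
  have "(\<Sum>s'\<in>UNIV. Kp \<rho> P s s') = 1" for s
  proof -
    have "(\<Sum>s'\<in>UNIV. Kp \<rho> P s s') = (\<Sum>a\<in>UNIV. \<Sum>s'\<in>UNIV. \<rho> s a * P s a s')"
      unfolding Kp_def by (rule sum.swap)
    also have "\<dots> = (\<Sum>a\<in>UNIV. \<rho> s a * (\<Sum>s'\<in>UNIV. P s a s'))"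
      by (simp add: sum_distrib_left)
    also have "\<dots> = 1" using assms unfolding is_policy_def is_kernel_def is_dist_def by simp
    finally show ?thesis .
  qed
  moreover have "0 \<le> Kp \<rho> P s s'" for s s'
    using assms unfolding Kp_def is_policy_def is_kernel_def is_dist_def
    by (intro sum_nonneg mult_nonneg_nonneg) auto
  ultimately show ?thesis unfolding stoch_def by auto
qed

lemma mk_nonneg: "stoch K \<Longrightarrow> (\<And>s. 0 \<le> \<mu> s) \<Longrightarrow> 0 \<le> mk K \<mu> t s"
  by (induction t arbitrary: s) (auto simp: stoch_def intro!: sum_nonneg)

lemma swap_mult: "(\<Sum>s'\<in>UNIV. \<Sum>s\<in>UNIV. (x s :: real) * K s s') = (\<Sum>s\<in>UNIV. x s * (\<Sum>s'\<in>UNIV. K s s'))"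
  by (subst sum.swap) (simp add: sum_distrib_left)

lemma mk_sum: "stoch K \<Longrightarrow> (\<Sum>s\<in>UNIV. mk K \<mu> t s) = (\<Sum>s\<in>UNIV. \<mu> s)"
proof (induction t)
  case (Suc t)
  have "(\<Sum>s'\<in>UNIV. mk K \<mu> (Suc t) s') = (\<Sum>s\<in>UNIV. mk K \<mu> t s * (\<Sum>s'\<in>UNIV. K s s'))"
    by (simp add: swap_mult)
  also have "\<dots> = (\<Sum>s\<in>UNIV. mk K \<mu> t s)" using Suc.prems by (simp add: stoch_def)
  finally show ?case using Suc by simp
qed simp

lemma mk_abs: "stoch K \<Longrightarrow> (\<Sum>s\<in>UNIV. \<bar>mk K \<mu> t s\<bar>) \<le> (\<Sum>s\<in>UNIV. \<bar>\<mu> s\<bar>)"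
proof (induction t)
  case (Suc t)
  have "\<bar>mk K \<mu> (Suc t) s'\<bar> \<le> (\<Sum>s\<in>UNIV. \<bar>mk K \<mu> t s\<bar> * K s s')" for s'
  proof -
    have "\<bar>mk K \<mu> (Suc t) s'\<bar> \<le> (\<Sum>s\<in>UNIV. \<bar>mk K \<mu> t s * K s s'\<bar>)"
      by (simp add: sum_abs)
    also have "\<dots> = (\<Sum>s\<in>UNIV. \<bar>mk K \<mu> t s\<bar> * K s s')"
      using Suc.prems by (simp add: stoch_def abs_mult)
    finally show ?thesis .
  qed
  then have "(\<Sum>s'\<in>UNIV. \<bar>mk K \<mu> (Suc t) s'\<bar>) \<le> (\<Sum>s'\<in>UNIV. \<Sum>s\<in>UNIV. \<bar>mk K \<mu> t s\<bar> * K s s')"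
    by (rule sum_mono)
  also have "\<dots> = (\<Sum>s\<in>UNIV. \<bar>mk K \<mu> t s\<bar> * (\<Sum>s'\<in>UNIV. K s s'))"
    by (rule swap_mult)
  also have "\<dots> = (\<Sum>s\<in>UNIV. \<bar>mk K \<mu> t s\<bar>)" using Suc.prems by (simp add: stoch_def)
  finally show ?case using Suc by simp
qed simp

lemma summable_occ:
  assumes "stoch K" "0 \<le> \<gamma>" "\<gamma> < 1"
  shows "summable (\<lambda>t. \<gamma> ^ t * (\<Sum>s\<in>UNIV. mk K \<mu> t s * u s))"
proof (rule summable_comparison_test)
  let ?c = "(\<Sum>s\<in>UNIV. \<bar>\<mu> s\<bar>) * (\<Sum>s\<in>UNIV. \<bar>u s\<bar>)"
  show "summable (\<lambda>t. \<gamma> ^ t * ?c)"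
    using assms by (intro summable_mult2 summable_geometric) auto
  have "norm (\<gamma> ^ t * (\<Sum>s\<in>UNIV. mk K \<mu> t s * u s)) \<le> \<gamma> ^ t * ?c" for t
  proof -
    have "\<bar>\<Sum>s\<in>UNIV. mk K \<mu> t s * u s\<bar> \<le> (\<Sum>s\<in>UNIV. \<bar>mk K \<mu> t s * u s\<bar>)"
      by (rule sum_abs)
    also have "\<dots> \<le> (\<Sum>s\<in>UNIV. \<bar>mk K \<mu> t s\<bar> * (\<Sum>s\<in>UNIV. \<bar>u s\<bar>))"
      unfolding abs_mult by (intro sum_mono mult_left_mono member_le_sum) auto
    also have "\<dots> = (\<Sum>s\<in>UNIV. \<bar>mk K \<mu> t s\<bar>) * (\<Sum>s\<in>UNIV. \<bar>u s\<bar>)"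
      by (simp add: sum_distrib_right)
    also have "\<dots> \<le> ?c" by (intro mult_right_mono mk_abs assms) (auto intro: sum_nonneg)
    finally show ?thesis using assms by (simp add: abs_mult mult_left_mono)
  qed
  then show "\<exists>N. \<forall>n\<ge>N. norm (\<gamma> ^ n * (\<Sum>s\<in>UNIV. mk K \<mu> n s * u s)) \<le> \<gamma> ^ n * ?c" by blast
qed


lemma mk_linear: "mk K \<mu> t s = (\<Sum>s0\<in>UNIV. \<mu> s0 * mk K (ind s0) t s)"
proof (induction t arbitrary: s)
  case 0
  have "(\<Sum>s0\<in>UNIV. \<mu> s0 * ind s0 s) = (\<Sum>s0\<in>UNIV. if s = s0 then \<mu> s0 else 0)"
    by (rule sum.cong) (auto simp: ind_def)
  then show ?case by simp
next
  case (Suc t)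
  have "mk K \<mu> (Suc t) s = (\<Sum>x\<in>UNIV. (\<Sum>s0\<in>UNIV. \<mu> s0 * mk K (ind s0) t x) * K x s)"
    using Suc by simp
  also have "\<dots> = (\<Sum>x\<in>UNIV. \<Sum>s0\<in>UNIV. \<mu> s0 * (mk K (ind s0) t x * K x s))"
    by (simp add: sum_distrib_right mult.assoc)
  also have "\<dots> = (\<Sum>s0\<in>UNIV. \<Sum>x\<in>UNIV. \<mu> s0 * (mk K (ind s0) t x * K x s))"
    by (rule sum.swap)
  also have "\<dots> = (\<Sum>s0\<in>UNIV. \<mu> s0 * mk K (ind s0) (Suc t) s)"
    by (simp add: sum_distrib_left)
  finally show ?case .
qed

lemma occ_linear_init:
  assumes "stoch K" "0 \<le> \<gamma>" "\<gamma> < 1"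
  shows "occ \<gamma> K \<mu> u = (\<Sum>s0\<in>UNIV. \<mu> s0 * occ \<gamma> K (ind s0) u)"
proof -
  have "occ \<gamma> K \<mu> u = (\<Sum>t. \<Sum>s0\<in>UNIV. \<mu> s0 * (\<gamma> ^ t * (\<Sum>s\<in>UNIV. mk K (ind s0) t s * u s)))"
    unfolding occ_def
  proof (rule suminf_cong)
    fix t
    have "\<gamma> ^ t * (\<Sum>s\<in>UNIV. mk K \<mu> t s * u s)
       = \<gamma> ^ t * (\<Sum>s\<in>UNIV. \<Sum>s0\<in>UNIV. \<mu> s0 * (mk K (ind s0) t s * u s))"
      by (subst mk_linear) (simp add: sum_distrib_right mult.assoc)
    also have "\<dots> = \<gamma> ^ t * (\<Sum>s0\<in>UNIV. \<Sum>s\<in>UNIV. \<mu> s0 * (mk K (ind s0) t s * u s))"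
      by (subst sum.swap) simp
    also have "\<dots> = (\<Sum>s0\<in>UNIV. \<mu> s0 * (\<gamma> ^ t * (\<Sum>s\<in>UNIV. mk K (ind s0) t s * u s)))"
      by (simp add: sum_distrib_left mult_ac)
    finally show "\<gamma> ^ t * (\<Sum>s\<in>UNIV. mk K \<mu> t s * u s) = (\<Sum>s0\<in>UNIV. \<mu> s0 * (\<gamma> ^ t * (\<Sum>s\<in>UNIV. mk K (ind s0) t s * u s)))" .
  qed
  also have "\<dots> = (\<Sum>s0\<in>UNIV. \<Sum>t. \<mu> s0 * (\<gamma> ^ t * (\<Sum>s\<in>UNIV. mk K (ind s0) t s * u s)))"
    by (rule suminf_sum) (intro summable_mult summable_occ assms)
  also have "\<dots> = (\<Sum>s0\<in>UNIV. \<mu> s0 * occ \<gamma> K (ind s0) u)"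
    unfolding occ_def by (intro sum.cong refl suminf_mult summable_occ assms)
  finally show ?thesis .
qed

lemma mk_shift: "mk K \<mu> (Suc t) = mk K (mk K \<mu> 1) t"
  by (induction t) auto

lemma occ_step:
  assumes "stoch K" "0 \<le> \<gamma>" "\<gamma> < 1"
  shows "occ \<gamma> K \<mu> u = (\<Sum>s\<in>UNIV. \<mu> s * u s) + \<gamma> * occ \<gamma> K (mk K \<mu> 1) u"
proof -
  let ?f = "\<lambda>t. \<gamma> ^ t * (\<Sum>s\<in>UNIV. mk K \<mu> t s * u s)"
  have sf: "summable ?f" by (rule summable_occ[OF assms])
  have "(\<Sum>t. ?f (Suc t)) = (\<Sum>t. \<gamma> * (\<gamma> ^ t * (\<Sum>s\<in>UNIV. mk K (mk K \<mu> 1) t s * u s)))"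
    by (subst mk_shift) (simp add: mult.assoc)
  also have "\<dots> = \<gamma> * occ \<gamma> K (mk K \<mu> 1) u"
    unfolding occ_def by (intro suminf_mult summable_occ assms)
  finally have "(\<Sum>t. ?f (Suc t)) = \<gamma> * occ \<gamma> K (mk K \<mu> 1) u" .
  with suminf_split_head[OF sf] show ?thesis unfolding occ_def by simp
qed

lemma occ_add:
  assumes "stoch K" "0 \<le> \<gamma>" "\<gamma> < 1"
  shows "occ \<gamma> K \<mu> (\<lambda>s. u s + v s) = occ \<gamma> K \<mu> u + occ \<gamma> K \<mu> v"
  unfolding occ_def
  by (subst suminf_add[OF summable_occ[OF assms] summable_occ[OF assms]])
     (simp add: algebra_simps sum.distrib)

lemma occ_diff:
  assumes "stoch K" "0 \<le> \<gamma>" "\<gamma> < 1"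
  shows "occ \<gamma> K \<mu> (\<lambda>s. u s - v s) = occ \<gamma> K \<mu> u - occ \<gamma> K \<mu> v"
  unfolding occ_def
  by (subst suminf_diff[OF summable_occ[OF assms] summable_occ[OF assms]])
     (simp add: algebra_simps sum_subtractf)

lemma occ_scale:
  assumes "stoch K" "0 \<le> \<gamma>" "\<gamma> < 1"
  shows "occ \<gamma> K \<mu> (\<lambda>s. c * u s) = c * occ \<gamma> K \<mu> u"
  unfolding occ_def
  by (subst suminf_mult[OF summable_occ[OF assms], symmetric])
     (simp add: algebra_simps sum_distrib_left)


definition rew :: "('s::finite \<Rightarrow> 'a::finite \<Rightarrow> real) \<Rightarrow> ('s \<Rightarrow> 'a \<Rightarrow> 's \<Rightarrow> real) \<Rightarrow> ('s \<Rightarrow> 'a \<Rightarrow> 's \<Rightarrow> real) \<Rightarrow> 's \<Rightarrow> real" where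
  "rew \<rho> P f s = (\<Sum>a\<in>UNIV. \<rho> s a * (\<Sum>s'\<in>UNIV. P s a s' * f s a s'))"

lemma sa_dist_prod:
  "sa_dist P \<rho> (\<lambda>s a. \<mu> s * \<rho> s a) t s a = mk (Kp \<rho> P) \<mu> t s * \<rho> s a"
proof (induction t arbitrary: s a)
  case (Suc t)
  then show ?case by (simp add: Kp_def sum_distrib_left sum_distrib_right mult_ac)
qed simp

lemma disc_term:
  "(\<Sum>s\<in>UNIV. \<Sum>a\<in>UNIV. sa_dist P \<rho> (\<lambda>s a. \<mu> s * \<rho> s a) t s a * (\<Sum>s'\<in>UNIV. P s a s' * f s a s'))
   = (\<Sum>s\<in>UNIV. mk (Kp \<rho> P) \<mu> t s * rew \<rho> P f s)"
  by (simp add: sa_dist_prod rew_def sum_distrib_left mult.assoc)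

lemma disc_prod:
  "disc_return \<gamma> f P \<rho> (\<lambda>s a. \<mu> s * \<rho> s a) = occ \<gamma> (Kp \<rho> P) \<mu> (rew \<rho> P f)"
  unfolding disc_return_def occ_def by (simp add: disc_term)

lemma J_eq: "J \<gamma> f P \<mu> \<rho> = occ \<gamma> (Kp \<rho> P) \<mu> (rew \<rho> P f)"
  unfolding J_def by (rule disc_prod)

lemma V_eq: "Vf \<gamma> f P \<rho> s0 = occ \<gamma> (Kp \<rho> P) (ind s0) (rew \<rho> P f)"
  unfolding Vf_def using disc_prod[of \<gamma> f P \<rho> "ind s0"] by (simp add: ind_def)

lemma sa_dist_shift: "sa_dist P \<rho> nu (Suc t) = sa_dist P \<rho> (sa_dist P \<rho> nu 1) t"
  by (induction t) auto

lemma delta2_sum: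
  fixes s0 :: "'s::finite" and a0 :: "'a::finite"
  shows "(\<Sum>s\<in>UNIV. \<Sum>a\<in>UNIV. (if s = s0 \<and> a = a0 then 1 else 0) * (X s a :: real)) = X s0 a0"
proof -
  have "(\<Sum>a\<in>UNIV. (if s = s0 \<and> a = a0 then 1 else 0) * X s a) = (if s = s0 then X s a0 else 0)" for s
  proof -
    have "(\<Sum>a\<in>UNIV. (if s = s0 \<and> a = a0 then 1 else 0) * X s a) = (\<Sum>a\<in>UNIV. if a = a0 then (if s = s0 then X s a else 0) else 0)"
      by (rule sum.cong) auto
    then show ?thesis by (simp add: sum.delta)
  qed
  then show ?thesis by (simp add: sum.delta)
qed

lemma ind_sum: fixes s0 :: "'s::finite" shows "(\<Sum>s\<in>UNIV. ind s0 s * (g s :: real)) = g s0"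
proof -
  have "(\<Sum>s\<in>UNIV. ind s0 s * g s) = (\<Sum>s\<in>UNIV. if s = s0 then g s else 0)"
    by (rule sum.cong) (auto simp: ind_def)
  then show ?thesis by (simp add: sum.delta)
qed

lemma Q_eq:
  assumes "stoch (Kp \<rho> P)" "0 \<le> \<gamma>" "\<gamma> < 1"
  shows "Qf \<gamma> f P \<rho> s0 a0 = (\<Sum>s'\<in>UNIV. P s0 a0 s' * f s0 a0 s') + \<gamma> * occ \<gamma> (Kp \<rho> P) (P s0 a0) (rew \<rho> P f)"
proof -
  define nu where "nu = (\<lambda>s a. if s = s0 \<and> a = a0 then 1 else (0::real))"
  define F where "F = (\<lambda>t. \<gamma> ^ t * (\<Sum>s\<in>UNIV. \<Sum>a\<in>UNIV. sa_dist P \<rho> nu t s a * (\<Sum>s'\<in>UNIV. P s a s' * f s a s')))"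
  have nu1: "sa_dist P \<rho> nu 1 = (\<lambda>s a. P s0 a0 s * \<rho> s a)"
    by (auto simp: nu_def delta2_sum[of s0 a0 "\<lambda>s a. P s a _"])
  have FS: "F (Suc t) = \<gamma> * (\<gamma> ^ t * (\<Sum>s\<in>UNIV. mk (Kp \<rho> P) (P s0 a0) t s * rew \<rho> P f s))" for t
    unfolding F_def by (subst sa_dist_shift) (simp only: nu1 disc_term, simp)
  have "summable (\<lambda>t. F (Suc t))"
    unfolding FS by (intro summable_mult summable_occ assms)
  then have sF: "summable F" by (simp add: summable_Suc_iff)
  have F0: "F 0 = (\<Sum>s'\<in>UNIV. P s0 a0 s' * f s0 a0 s')"
    unfolding F_def by (simp add: nu_def delta2_sum[of s0 a0 "\<lambda>s a. \<Sum>s'\<in>UNIV. P s a s' * f s a s'"])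
  have "(\<Sum>t. F (Suc t)) = \<gamma> * occ \<gamma> (Kp \<rho> P) (P s0 a0) (rew \<rho> P f)"
    unfolding FS occ_def by (intro suminf_mult summable_occ assms)
  moreover have "Qf \<gamma> f P \<rho> s0 a0 = suminf F"
    unfolding Qf_def disc_return_def F_def nu_def by simp
  ultimately show ?thesis using suminf_split_head[OF sF] F0 by simp
qed

lemma mk_ind1: "mk K (ind s0) 1 = K s0"
  by (auto simp: ind_sum)

lemma V_bell:
  assumes "stoch (Kp \<rho> P)" "0 \<le> \<gamma>" "\<gamma> < 1"
  shows "Vf \<gamma> f P \<rho> s0 = rew \<rho> P f s0 + \<gamma> * (\<Sum>s'\<in>UNIV. Kp \<rho> P s0 s' * Vf \<gamma> f P \<rho> s')"
  unfolding V_eq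
  by (subst occ_step[OF assms], subst occ_linear_init[OF assms, of "mk _ _ 1"]) (simp add: ind_sum mk_ind1)

lemma Q_bell:
  assumes "stoch (Kp \<rho> P)" "0 \<le> \<gamma>" "\<gamma> < 1"
  shows "Qf \<gamma> f P \<rho> s0 a0 = (\<Sum>s'\<in>UNIV. P s0 a0 s' * f s0 a0 s') + \<gamma> * (\<Sum>s'\<in>UNIV. P s0 a0 s' * Vf \<gamma> f P \<rho> s')"
  unfolding Q_eq[OF assms] V_eq
  by (subst occ_linear_init[OF assms]) simp


lemma Kp_sum1:
  assumes "is_policy \<rho>" "is_kernel P"
  shows "(\<Sum>a\<in>UNIV. \<rho> s a * (\<Sum>s'\<in>UNIV. P s a s')) = 1"
  using assms unfolding is_policy_def is_kernel_def is_dist_def by simp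

lemma pw_lemma:
  assumes pol: "is_policy \<rho>" and ker: "is_kernel P"
  shows "(\<Sum>a\<in>UNIV. \<rho> s a * (\<Sum>s'\<in>UNIV. P s a s' * (f s a s' + \<gamma> * V s' - V s)))
          = rew \<rho> P f s + \<gamma> * (\<Sum>s'\<in>UNIV. Kp \<rho> P s s' * V s') - V s"
proof -
  have "(\<Sum>a\<in>UNIV. \<rho> s a * (\<Sum>s'\<in>UNIV. P s a s' * (f s a s' + \<gamma> * V s' - V s)))
    = (\<Sum>a\<in>UNIV. \<rho> s a * (\<Sum>s'\<in>UNIV. P s a s' * f s a s')) + \<gamma> * (\<Sum>a\<in>UNIV. \<Sum>s'\<in>UNIV. \<rho> s a * P s a s' * V s')
      - V s * (\<Sum>a\<in>UNIV. \<rho> s a * (\<Sum>s'\<in>UNIV. P s a s'))"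
  proof -
    have i: "\<rho> s a * (\<Sum>s'\<in>UNIV. P s a s' * (f s a s' + \<gamma> * V s' - V s))
       = \<rho> s a * (\<Sum>s'\<in>UNIV. P s a s' * f s a s') + \<gamma> * (\<Sum>s'\<in>UNIV. \<rho> s a * P s a s' * V s')
         - V s * (\<rho> s a * (\<Sum>s'\<in>UNIV. P s a s'))" for a
    proof -
      have "(\<Sum>s'\<in>UNIV. P s a s' * (f s a s' + \<gamma> * V s' - V s))
          = (\<Sum>s'\<in>UNIV. P s a s' * f s a s' + \<gamma> * (P s a s' * V s') - V s * P s a s')"
        by (rule sum.cong) (auto simp: algebra_simps)
      also have "\<dots> = (\<Sum>s'\<in>UNIV. P s a s' * f s a s') + \<gamma> * (\<Sum>s'\<in>UNIV. P s a s' * V s') - V s * (\<Sum>s'\<in>UNIV. P s a s')"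
        by (simp only: sum.distrib sum_subtractf sum_distrib_left)
      finally have X: "(\<Sum>s'\<in>UNIV. P s a s' * (f s a s' + \<gamma> * V s' - V s))
        = (\<Sum>s'\<in>UNIV. P s a s' * f s a s') + \<gamma> * (\<Sum>s'\<in>UNIV. P s a s' * V s') - V s * (\<Sum>s'\<in>UNIV. P s a s')" .
      have e: "(\<Sum>s'\<in>UNIV. \<rho> s a * P s a s' * V s') = \<rho> s a * (\<Sum>s'\<in>UNIV. P s a s' * V s')"
        by (simp add: sum_distrib_left mult.assoc)
      show ?thesis unfolding X e by (simp add: algebra_simps)
    qed
    show ?thesis unfolding i
      by (simp only: sum.distrib sum_subtractf sum_distrib_left)
  qed
  also have "(\<Sum>a\<in>UNIV. \<Sum>s'\<in>UNIV. \<rho> s a * P s a s' * V s') = (\<Sum>s'\<in>UNIV. Kp \<rho> P s s' * V s')"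
    unfolding Kp_def by (subst sum.swap) (simp add: sum_distrib_right)
  finally show ?thesis using Kp_sum1[OF pol ker] by (simp add: rew_def)
qed

lemma telescope:
  assumes pol: "is_policy \<rho>" and ker: "is_kernel P" and g: "0 \<le> \<gamma>" "\<gamma> < 1"
  shows "occ \<gamma> (Kp \<rho> P) \<mu> (rew \<rho> P f) = (\<Sum>s\<in>UNIV. \<mu> s * V s)
     + occ \<gamma> (Kp \<rho> P) \<mu> (\<lambda>s. \<Sum>a\<in>UNIV. \<rho> s a * (\<Sum>s'\<in>UNIV. P s a s' * (f s a s' + \<gamma> * V s' - V s)))"
proof -
  let ?K = "Kp \<rho> P"
  have st: "stoch ?K" by (rule stoch_Kp[OF pol ker])
  note as = st g
  define KV where "KV = (\<lambda>s. \<Sum>s'\<in>UNIV. ?K s s' * V s')"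
  have pw: "(\<Sum>a\<in>UNIV. \<rho> s a * (\<Sum>s'\<in>UNIV. P s a s' * (f s a s' + \<gamma> * V s' - V s)))
          = rew \<rho> P f s + \<gamma> * KV s - V s" for s
    unfolding KV_def by (rule pw_lemma[OF pol ker])
  have e1: "occ \<gamma> ?K \<mu> (\<lambda>s. \<Sum>a\<in>UNIV. \<rho> s a * (\<Sum>s'\<in>UNIV. P s a s' * (f s a s' + \<gamma> * V s' - V s)))
      = occ \<gamma> ?K \<mu> (rew \<rho> P f) + \<gamma> * occ \<gamma> ?K \<mu> KV - occ \<gamma> ?K \<mu> V"
    unfolding pw by (simp add: occ_add[OF as] occ_diff[OF as] occ_scale[OF as])
  define F where "F = (\<lambda>t. \<gamma> ^ t * (\<Sum>s\<in>UNIV. mk ?K \<mu> t s * V s))"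
  have sF: "summable F" unfolding F_def by (rule summable_occ[OF as])
  have FS: "F (Suc t) = \<gamma> * (\<gamma> ^ t * (\<Sum>s\<in>UNIV. mk ?K \<mu> t s * KV s))" for t
  proof -
    have "(\<Sum>s'\<in>UNIV. mk ?K \<mu> (Suc t) s' * V s') = (\<Sum>s'\<in>UNIV. \<Sum>s\<in>UNIV. mk ?K \<mu> t s * ?K s s' * V s')"
      by (simp add: sum_distrib_right)
    also have "\<dots> = (\<Sum>s\<in>UNIV. mk ?K \<mu> t s * KV s)"
      unfolding KV_def by (subst sum.swap) (simp add: sum_distrib_left mult.assoc)
    finally show ?thesis unfolding F_def by simp
  qed
  have "(\<Sum>t. F (Suc t)) = \<gamma> * occ \<gamma> ?K \<mu> KV"
    unfolding FS occ_def by (intro suminf_mult summable_occ as)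
  with suminf_split_head[OF sF] have "occ \<gamma> ?K \<mu> V = (\<Sum>s\<in>UNIV. \<mu> s * V s) + \<gamma> * occ \<gamma> ?K \<mu> KV"
    unfolding occ_def F_def by simp
  with e1 show ?thesis by simp
qed

lemma summable_mk:
  assumes "stoch K" "0 \<le> \<gamma>" "\<gamma> < 1"
  shows "summable (\<lambda>t. \<gamma> ^ t * mk K \<mu> t s * c)"
proof -
  have "(\<Sum>x\<in>UNIV. mk K \<mu> t x * (ind s x * c)) = mk K \<mu> t s * c" for t
    using ind_sum[of s "\<lambda>x. mk K \<mu> t x * c"] by (simp add: mult_ac)
  then show ?thesis using summable_occ[OF assms, of \<mu> "\<lambda>x. ind s x * c"] by (simp add: mult.assoc)
qed

lemma dstate_eq:
  assumes "is_policy \<rho>"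
  shows "dstate \<gamma> P \<mu> \<rho> s = (1 - \<gamma>) * (\<Sum>t. \<gamma> ^ t * mk (Kp \<rho> P) \<mu> t s)"
  using assms unfolding dstate_def is_policy_def is_dist_def
  by (simp add: sa_dist_prod sum_distrib_left[symmetric])

lemma occ_bound:
  assumes "stoch K" "0 \<le> \<gamma>" "\<gamma> < 1" "is_dist \<mu>" "\<And>s. \<bar>u s\<bar> \<le> B"
  shows "\<bar>occ \<gamma> K \<mu> u\<bar> \<le> B / (1 - \<gamma>)"
proof -
  let ?f = "\<lambda>t. \<gamma> ^ t * (\<Sum>s\<in>UNIV. mk K \<mu> t s * u s)"
  have gs: "(\<lambda>t. \<gamma> ^ t * B) sums (1 / (1 - \<gamma>) * B)"
    using assms by (intro sums_mult2 geometric_sums) auto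
  have nn: "0 \<le> mk K \<mu> t s" for t s using assms by (intro mk_nonneg) (auto simp: is_dist_def)
  have b: "\<bar>?f t\<bar> \<le> \<gamma> ^ t * B" for t
  proof -
    have "\<bar>\<Sum>s\<in>UNIV. mk K \<mu> t s * u s\<bar> \<le> (\<Sum>s\<in>UNIV. \<bar>mk K \<mu> t s * u s\<bar>)" by (rule sum_abs)
    also have "\<dots> \<le> (\<Sum>s\<in>UNIV. mk K \<mu> t s * B)"
      using nn assms(5) by (intro sum_mono) (simp add: abs_mult mult_left_mono)
    also have "\<dots> = B" using mk_sum[OF assms(1)] assms(4)
      by (simp add: sum_distrib_right[symmetric] is_dist_def)
    finally show ?thesis using assms(2) by (simp add: abs_mult mult_left_mono)
  qed
  have sf: "?f sums occ \<gamma> K \<mu> u" unfolding occ_def by (intro summable_sums summable_occ assms)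
  have "occ \<gamma> K \<mu> u \<le> 1 / (1 - \<gamma>) * B"
    by (rule sums_le[OF _ sf gs]) (use b in \<open>simp add: abs_le_iff\<close>)
  moreover have "- occ \<gamma> K \<mu> u \<le> 1 / (1 - \<gamma>) * B"
    by (rule sums_le[OF _ sums_minus[OF sf] gs]) (use b in \<open>simp add: abs_le_iff\<close>)
  ultimately show ?thesis by simp
qed

lemma n_geom_sums:
  assumes "0 \<le> (\<gamma>::real)" "\<gamma> < 1"
  shows "(\<lambda>n. real n * \<gamma> ^ n) sums (\<gamma> / (1 - \<gamma>)^2)"
proof -
  have "(\<lambda>n. of_nat (Suc n) * \<gamma> ^ n) sums (1 / (1 - \<gamma>)^2)"
    using assms by (intro geometric_deriv_sums) auto
  then have "(\<lambda>n. \<gamma> * (of_nat (Suc n) * \<gamma> ^ n)) sums (\<gamma> * (1 / (1 - \<gamma>)^2))"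
    by (rule sums_mult)
  then have "(\<lambda>n. real (Suc n) * \<gamma> ^ (Suc n)) sums (\<gamma> / (1 - \<gamma>)^2)"
    by (simp add: mult_ac)
  then show ?thesis by (subst (asm) sums_Suc_iff) simp
qed

lemma mk_diff_bound:
  assumes "stoch K1" "stoch K2" "is_dist \<mu>" "\<And>s. (\<Sum>s'\<in>UNIV. \<bar>K1 s s' - K2 s s'\<bar>) \<le> 2 * \<eta>"
  shows "(\<Sum>s\<in>UNIV. \<bar>mk K1 \<mu> t s - mk K2 \<mu> t s\<bar>) \<le> 2 * \<eta> * real t"
proof (induction t)
  case (Suc t)
  define d where "d = (\<lambda>s. mk K1 \<mu> t s - mk K2 \<mu> t s)"
  define A where "A = (\<lambda>s'. \<Sum>s\<in>UNIV. \<bar>d s\<bar> * K1 s s')"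
  define B where "B = (\<lambda>s'. \<Sum>s\<in>UNIV. mk K2 \<mu> t s * \<bar>K1 s s' - K2 s s'\<bar>)"
  have nn: "0 \<le> mk K2 \<mu> t s" for s using assms by (intro mk_nonneg) (auto simp: is_dist_def)
  have k1: "0 \<le> K1 s s'" for s s' using assms(1) by (simp add: stoch_def)
  have pw: "\<bar>mk K1 \<mu> (Suc t) s' - mk K2 \<mu> (Suc t) s'\<bar> \<le> A s' + B s'" for s'
  proof -
    have eq: "mk K1 \<mu> (Suc t) s' - mk K2 \<mu> (Suc t) s'
        = (\<Sum>s\<in>UNIV. d s * K1 s s') + (\<Sum>s\<in>UNIV. mk K2 \<mu> t s * (K1 s s' - K2 s s'))"
    proof -
      have "(\<Sum>s\<in>UNIV. d s * K1 s s') + (\<Sum>s\<in>UNIV. mk K2 \<mu> t s * (K1 s s' - K2 s s'))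
          = (\<Sum>s\<in>UNIV. d s * K1 s s' + mk K2 \<mu> t s * (K1 s s' - K2 s s'))"
        by (rule sum.distrib[symmetric])
      also have "\<dots> = (\<Sum>s\<in>UNIV. mk K1 \<mu> t s * K1 s s' - mk K2 \<mu> t s * K2 s s')"
        by (rule sum.cong) (auto simp: d_def algebra_simps)
      also have "\<dots> = mk K1 \<mu> (Suc t) s' - mk K2 \<mu> (Suc t) s'"
        by (simp add: sum_subtractf)
      finally show ?thesis by simp
    qed
    have a1: "\<bar>\<Sum>s\<in>UNIV. d s * K1 s s'\<bar> \<le> A s'"
    proof -
      have "\<bar>\<Sum>s\<in>UNIV. d s * K1 s s'\<bar> \<le> (\<Sum>s\<in>UNIV. \<bar>d s * K1 s s'\<bar>)" by (rule sum_abs)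
      also have "\<dots> = A s'" unfolding A_def by (rule sum.cong) (auto simp: abs_mult k1)
      finally show ?thesis .
    qed
    have b1: "\<bar>\<Sum>s\<in>UNIV. mk K2 \<mu> t s * (K1 s s' - K2 s s')\<bar> \<le> B s'"
    proof -
      have "\<bar>\<Sum>s\<in>UNIV. mk K2 \<mu> t s * (K1 s s' - K2 s s')\<bar> \<le> (\<Sum>s\<in>UNIV. \<bar>mk K2 \<mu> t s * (K1 s s' - K2 s s')\<bar>)" by (rule sum_abs)
      also have "\<dots> = B s'" unfolding B_def by (rule sum.cong) (auto simp: abs_mult nn)
      finally show ?thesis .
    qed
    show ?thesis unfolding eq using a1 b1 abs_triangle_ineq[of "\<Sum>s\<in>UNIV. d s * K1 s s'" "\<Sum>s\<in>UNIV. mk K2 \<mu> t s * (K1 s s' - K2 s s')"]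
      by linarith
  qed
  have "(\<Sum>s'\<in>UNIV. \<bar>mk K1 \<mu> (Suc t) s' - mk K2 \<mu> (Suc t) s'\<bar>) \<le> (\<Sum>s'\<in>UNIV. A s' + B s')"
    by (rule sum_mono[OF pw])
  moreover have "(\<Sum>s'\<in>UNIV. A s' + B s') = (\<Sum>s'\<in>UNIV. A s') + (\<Sum>s'\<in>UNIV. B s')"
    by (rule sum.distrib)
  moreover have "(\<Sum>s'\<in>UNIV. A s') = (\<Sum>s\<in>UNIV. \<bar>d s\<bar>)"
  proof -
    have "(\<Sum>s'\<in>UNIV. A s') = (\<Sum>s\<in>UNIV. \<bar>d s\<bar> * (\<Sum>s'\<in>UNIV. K1 s s'))"
      unfolding A_def by (rule swap_mult)
    then show ?thesis using assms(1) by (simp add: stoch_def)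
  qed
  moreover have "(\<Sum>s'\<in>UNIV. B s') \<le> 2 * \<eta>"
  proof -
    have "(\<Sum>s'\<in>UNIV. B s') = (\<Sum>s\<in>UNIV. mk K2 \<mu> t s * (\<Sum>s'\<in>UNIV. \<bar>K1 s s' - K2 s s'\<bar>))"
      unfolding B_def by (rule swap_mult)
    also have "\<dots> \<le> (\<Sum>s\<in>UNIV. mk K2 \<mu> t s * (2 * \<eta>))"
      by (intro sum_mono mult_left_mono assms(4) nn)
    also have "\<dots> = (\<Sum>s\<in>UNIV. mk K2 \<mu> t s) * (2 * \<eta>)"
      by (simp add: sum_distrib_right)
    also have "\<dots> = 2 * \<eta>" using mk_sum[OF assms(2)] assms(3) by (simp add: is_dist_def)
    finally show ?thesis .
  qed
  moreover have "(\<Sum>s\<in>UNIV. \<bar>d s\<bar>) \<le> 2 * \<eta> * real t" using Suc.IH unfolding d_def .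
  ultimately show ?case by (simp add: algebra_simps)
qed simp

lemma occ_diff_bound:
  assumes "stoch K1" "stoch K2" "0 \<le> \<gamma>" "\<gamma> < 1" "is_dist \<mu>"
    "\<And>s. (\<Sum>s'\<in>UNIV. \<bar>K1 s s' - K2 s s'\<bar>) \<le> 2 * \<eta>" "\<And>s. \<bar>u s\<bar> \<le> B"
  shows "\<bar>occ \<gamma> K1 \<mu> u - occ \<gamma> K2 \<mu> u\<bar> \<le> 2 * \<eta> * B * (\<gamma> / (1 - \<gamma>)^2)"
proof -
  let ?f = "\<lambda>t. \<gamma> ^ t * (\<Sum>s\<in>UNIV. mk K1 \<mu> t s * u s) - \<gamma> ^ t * (\<Sum>s\<in>UNIV. mk K2 \<mu> t s * u s)"
  have B0: "0 \<le> B" using assms(7)[of undefined] by simp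
  have gs: "(\<lambda>t. (2 * \<eta> * B) * (real t * \<gamma> ^ t)) sums ((2 * \<eta> * B) * (\<gamma> / (1 - \<gamma>)^2))"
    by (intro sums_mult n_geom_sums assms)
  have b: "\<bar>?f t\<bar> \<le> (2 * \<eta> * B) * (real t * \<gamma> ^ t)" for t
  proof -
    have "\<bar>(\<Sum>s\<in>UNIV. mk K1 \<mu> t s * u s) - (\<Sum>s\<in>UNIV. mk K2 \<mu> t s * u s)\<bar>
        = \<bar>\<Sum>s\<in>UNIV. (mk K1 \<mu> t s - mk K2 \<mu> t s) * u s\<bar>"
      by (simp add: sum_subtractf left_diff_distrib)
    also have "\<dots> \<le> (\<Sum>s\<in>UNIV. \<bar>(mk K1 \<mu> t s - mk K2 \<mu> t s) * u s\<bar>)" by (rule sum_abs)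
    also have "\<dots> \<le> (\<Sum>s\<in>UNIV. \<bar>mk K1 \<mu> t s - mk K2 \<mu> t s\<bar> * B)"
      using assms(7) by (intro sum_mono) (simp add: abs_mult mult_left_mono)
    also have "\<dots> = (\<Sum>s\<in>UNIV. \<bar>mk K1 \<mu> t s - mk K2 \<mu> t s\<bar>) * B"
      by (simp add: sum_distrib_right)
    also have "\<dots> \<le> (2 * \<eta> * real t) * B"
      by (intro mult_right_mono mk_diff_bound assms B0)
    finally have "\<bar>(\<Sum>s\<in>UNIV. mk K1 \<mu> t s * u s) - (\<Sum>s\<in>UNIV. mk K2 \<mu> t s * u s)\<bar> \<le> 2 * \<eta> * real t * B" .
    then have "\<gamma> ^ t * \<bar>(\<Sum>s\<in>UNIV. mk K1 \<mu> t s * u s) - (\<Sum>s\<in>UNIV. mk K2 \<mu> t s * u s)\<bar> \<le> \<gamma> ^ t * (2 * \<eta> * real t * B)"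
      using assms(3) by (intro mult_left_mono) auto
    then show ?thesis using assms(3) by (simp add: abs_mult right_diff_distrib[symmetric] mult_ac)
  qed
  have sf: "?f sums (occ \<gamma> K1 \<mu> u - occ \<gamma> K2 \<mu> u)" unfolding occ_def
    by (intro sums_diff summable_sums summable_occ assms)
  have "occ \<gamma> K1 \<mu> u - occ \<gamma> K2 \<mu> u \<le> (2 * \<eta> * B) * (\<gamma> / (1 - \<gamma>)^2)"
    by (rule sums_le[OF _ sf gs]) (use b in \<open>simp add: abs_le_iff\<close>)
  moreover have "- (occ \<gamma> K1 \<mu> u - occ \<gamma> K2 \<mu> u) \<le> (2 * \<eta> * B) * (\<gamma> / (1 - \<gamma>)^2)"
    by (rule sums_le[OF _ sums_minus[OF sf] gs]) (use b in \<open>simp add: abs_le_iff\<close>)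
  ultimately show ?thesis by simp
qed


lemma tv_bound:
  fixes p q :: "'x::finite \<Rightarrow> real"
  assumes "\<And>x. \<bar>y x\<bar> \<le> B"
  shows "\<bar>\<Sum>x\<in>UNIV. (p x - q x) * y x\<bar> \<le> 2 * dTV p q * B"
proof -
  have "\<bar>\<Sum>x\<in>UNIV. (p x - q x) * y x\<bar> \<le> (\<Sum>x\<in>UNIV. \<bar>(p x - q x) * y x\<bar>)" by (rule sum_abs)
  also have "\<dots> \<le> (\<Sum>x\<in>UNIV. \<bar>p x - q x\<bar> * B)"
    using assms by (intro sum_mono) (simp add: abs_mult mult_left_mono)
  also have "\<dots> = 2 * dTV p q * B" by (simp add: dTV_def sum_distrib_right)
  finally show ?thesis .
qed

lemma dist_avg_bound:
  fixes p :: "'x::finite \<Rightarrow> real"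
  assumes "is_dist p" "\<And>x. \<bar>y x\<bar> \<le> B"
  shows "\<bar>\<Sum>x\<in>UNIV. p x * y x\<bar> \<le> B"
proof -
  have "\<bar>\<Sum>x\<in>UNIV. p x * y x\<bar> \<le> (\<Sum>x\<in>UNIV. \<bar>p x * y x\<bar>)" by (rule sum_abs)
  also have "\<dots> \<le> (\<Sum>x\<in>UNIV. p x * B)"
    using assms by (intro sum_mono) (simp add: abs_mult mult_left_mono is_dist_def)
  also have "\<dots> = B" using assms(1) by (simp add: is_dist_def sum_distrib_right[symmetric])
  finally show ?thesis .
qed

lemma kern_dist1:
  assumes "is_kernel P"
  shows "(\<Sum>s'\<in>UNIV. \<bar>\<Sum>a\<in>UNIV. (\<rho>1 s a - \<rho>2 s a) * P s a s'\<bar>) \<le> 2 * dTV (\<rho>1 s) (\<rho>2 s)"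
proof -
  have "(\<Sum>s'\<in>UNIV. \<bar>\<Sum>a\<in>UNIV. (\<rho>1 s a - \<rho>2 s a) * P s a s'\<bar>) \<le> (\<Sum>s'\<in>UNIV. \<Sum>a\<in>UNIV. \<bar>\<rho>1 s a - \<rho>2 s a\<bar> * P s a s')"
    using assms by (intro sum_mono order.trans[OF sum_abs]) (simp add: abs_mult is_kernel_def is_dist_def)
  also have "\<dots> = (\<Sum>a\<in>UNIV. \<bar>\<rho>1 s a - \<rho>2 s a\<bar> * (\<Sum>s'\<in>UNIV. P s a s'))"
    by (rule swap_mult)
  also have "\<dots> = 2 * dTV (\<rho>1 s) (\<rho>2 s)" using assms by (simp add: is_kernel_def is_dist_def dTV_def)
  finally show ?thesis .
qed

lemma kern_dist2:
  assumes "is_policy \<rho>" "\<And>a. dTV (P s a) (Q s a) \<le> e"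
  shows "(\<Sum>s'\<in>UNIV. \<bar>\<Sum>a\<in>UNIV. \<rho> s a * (P s a s' - Q s a s')\<bar>) \<le> 2 * e"
proof -
  have nn: "0 \<le> \<rho> s a" for a using assms(1) by (simp add: is_policy_def is_dist_def)
  have "(\<Sum>s'\<in>UNIV. \<bar>\<Sum>a\<in>UNIV. \<rho> s a * (P s a s' - Q s a s')\<bar>) \<le> (\<Sum>s'\<in>UNIV. \<Sum>a\<in>UNIV. \<rho> s a * \<bar>P s a s' - Q s a s'\<bar>)"
    using nn by (intro sum_mono order.trans[OF sum_abs]) (simp add: abs_mult)
  also have "\<dots> = (\<Sum>a\<in>UNIV. \<Sum>s'\<in>UNIV. \<rho> s a * \<bar>P s a s' - Q s a s'\<bar>)" by (rule sum.swap)
  also have "\<dots> = (\<Sum>a\<in>UNIV. \<rho> s a * (2 * dTV (P s a) (Q s a)))"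
    by (simp add: dTV_def sum_distrib_left)
  also have "\<dots> \<le> (\<Sum>a\<in>UNIV. \<rho> s a * (2 * e))"
    using nn assms(2) by (intro sum_mono mult_left_mono) auto
  also have "\<dots> = 2 * e" using assms(1) by (simp add: is_policy_def is_dist_def sum_distrib_right[symmetric])
  finally show ?thesis .
qed

lemma finite_set3: "finite {g s a s' | (s::'s::finite) (a::'a::finite) (s'::'s). True}"
proof (rule finite_subset)
  show "{g s a s' | (s::'s) (a::'a) (s'::'s). True} \<subseteq> (\<lambda>(s,a,s'). g s a s') ` UNIV"
  proof
    fix x assume "x \<in> {g s a s' | (s::'s) (a::'a) (s'::'s). True}"
    then obtain s a s' where "x = g s a s'" by blast
    then show "x \<in> (\<lambda>(s,a,s'). g s a s') ` UNIV" by (intro image_eqI[of _ _ "(s,a,s')"]) auto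
  qed
qed simp

lemma finite_set2: "finite {g s a | (s::'s::finite) (a::'a::finite). True}"
proof -
  have "{g s a | (s::'s) (a::'a). True} = (\<lambda>(s,a). g s a) ` UNIV" by auto
  then show ?thesis by simp
qed

lemma finite_set1: "finite {g s | (s::'s::finite). True}"
proof -
  have "{g s | (s::'s). True} = g ` UNIV" by auto
  then show ?thesis by simp
qed

lemma dm_ge: "\<bar>f s a s' + \<gamma> * Vf \<gamma> f Pm \<pi> s' - Vf \<gamma> f Pm \<pi> s\<bar> \<le> delta_max \<gamma> f Pm \<pi>"
  unfolding delta_max_def by (rule Max_ge[OF finite_set3]) blast

lemma ep_ge: "dTV (\<pi>' s) (\<pi> s) \<le> eps_pi \<pi> \<pi>'"
  unfolding eps_pi_def by (rule Max_ge[OF finite_set1]) blast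

lemma em_ge: "dTV (P s a) (Pm s a) \<le> eps_m P Pm"
  unfolding eps_m_def by (rule Max_ge[OF finite_set2]) blast


theorem mainTheorem1:
  fixes \<gamma> :: real
    and r :: "'s::finite \<Rightarrow> 'a::finite \<Rightarrow> 's \<Rightarrow> real"
    and C :: "('s \<Rightarrow> 'a \<Rightarrow> 's \<Rightarrow> real) set"
    and P Pm :: "'s \<Rightarrow> 'a \<Rightarrow> 's \<Rightarrow> real"
    and \<mu> :: "'s \<Rightarrow> real"
    and D :: "('s \<Rightarrow> 'a \<Rightarrow> 's \<Rightarrow> real) \<Rightarrow> real"
    and \<pi> \<pi>' :: "'s \<Rightarrow> 'a \<Rightarrow> real"
  assumes "0 \<le> \<gamma>" and "\<gamma> < 1"
    and "is_kernel P" and "is_kernel Pm" and "is_dist \<mu>"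
    and "is_policy \<pi>" and "is_policy \<pi>'"
  shows "\<forall>f \<in> insert r C.
      let eps = eps_total \<gamma> (eps_pi \<pi> \<pi>') (eps_m P Pm);
          L = Lsur \<gamma> f Pm \<mu> \<pi> \<pi>';
          dm = delta_max \<gamma> f Pm \<pi>;
          dJ = J \<gamma> f P \<mu> \<pi>' - J \<gamma> f P \<mu> \<pi>
      in L / (1 - \<gamma>) - 4 * dm * eps / (1 - \<gamma>) \<le> dJ
       \<and> dJ \<le> L / (1 - \<gamma>) + 4 * dm * eps / (1 - \<gamma>)"
proof (intro ballI)
  fix f assume "f \<in> insert r C"
  note gg = assms(1,2)
  note kerP = assms(3) and kerm = assms(4) and mud = assms(5) and pol = assms(6) and pol' = assms(7)
  define V where "V = Vf \<gamma> f Pm \<pi>"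
  define dl where "dl = (\<lambda>s a s'. f s a s' + \<gamma> * V s' - V s)"
  define GP where "GP = (\<lambda>s a. \<Sum>s'\<in>UNIV. P s a s' * dl s a s')"
  define Gm where "Gm = (\<lambda>s a. \<Sum>s'\<in>UNIV. Pm s a s' * dl s a s')"
  define ep where "ep = eps_pi \<pi> \<pi>'"
  define em where "em = eps_m P Pm"
  define dm where "dm = delta_max \<gamma> f Pm \<pi>"
  define h where "h = (\<lambda>s. \<Sum>a\<in>UNIV. \<pi>' s a * Gm s a)"
  define g' where "g' = (\<lambda>s. \<Sum>a\<in>UNIV. \<pi>' s a * GP s a)"
  define g where "g = (\<lambda>s. \<Sum>a\<in>UNIV. \<pi> s a * GP s a)"
  define w where "w = (\<lambda>s. g' s - h s - g s)"
  have st1: "stoch (Kp \<pi>' P)" by (rule stoch_Kp[OF pol' kerP])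
  have st0: "stoch (Kp \<pi> P)" by (rule stoch_Kp[OF pol kerP])
  have stm: "stoch (Kp \<pi> Pm)" by (rule stoch_Kp[OF pol kerm])
  have dl_b: "\<bar>dl s a s'\<bar> \<le> dm" for s a s'
    unfolding dl_def dm_def V_def by (rule dm_ge)
  have dm0: "0 \<le> dm" using dl_b[of undefined undefined undefined] by simp
  have em0: "0 \<le> em"
  proof -
    have "0 \<le> dTV (P undefined undefined) (Pm undefined undefined)"
      unfolding dTV_def by (simp add: sum_nonneg)
    also have "\<dots> \<le> em" unfolding em_def by (rule em_ge)
    finally show ?thesis .
  qed
  have Gm_b: "\<bar>Gm s a\<bar> \<le> dm" for s a
    unfolding Gm_def using kerm dl_b by (intro dist_avg_bound) (auto simp: is_kernel_def)
  have GPGm_b: "\<bar>GP s a - Gm s a\<bar> \<le> 2 * em * dm" for s a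
  proof -
    have "GP s a - Gm s a = (\<Sum>s'\<in>UNIV. (P s a s' - Pm s a s') * dl s a s')"
      by (simp add: GP_def Gm_def sum_subtractf left_diff_distrib)
    also have "\<bar>\<dots>\<bar> \<le> 2 * dTV (P s a) (Pm s a) * dm" by (rule tv_bound[OF dl_b])
    also have "\<dots> \<le> 2 * em * dm" unfolding em_def using dm0 em_ge by (intro mult_right_mono) auto
    finally show ?thesis .
  qed
  have Gm_eq: "Gm s a = (\<Sum>s'\<in>UNIV. Pm s a s' * f s a s') + \<gamma> * (\<Sum>s'\<in>UNIV. Pm s a s' * V s') - V s" for s a
  proof -
    have "Gm s a = (\<Sum>s'\<in>UNIV. Pm s a s' * f s a s' + \<gamma> * (Pm s a s' * V s') - V s * Pm s a s')"
      unfolding Gm_def dl_def by (rule sum.cong) (auto simp: algebra_simps)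
    also have "\<dots> = (\<Sum>s'\<in>UNIV. Pm s a s' * f s a s') + \<gamma> * (\<Sum>s'\<in>UNIV. Pm s a s' * V s') - V s * (\<Sum>s'\<in>UNIV. Pm s a s')"
      by (simp only: sum.distrib sum_subtractf sum_distrib_left)
    finally show ?thesis using kerm by (simp add: is_kernel_def is_dist_def)
  qed
  have Af_eq: "Af \<gamma> f Pm \<pi> s a = Gm s a" for s a
    unfolding Af_def Gm_eq Q_bell[OF stm gg] V_def by simp
  have sumGm: "(\<Sum>a\<in>UNIV. \<pi> s a * Gm s a) = 0" for s
  proof -
    have "(\<Sum>a\<in>UNIV. \<pi> s a * Gm s a) = rew \<pi> Pm f s + \<gamma> * (\<Sum>s'\<in>UNIV. Kp \<pi> Pm s s' * V s') - V s"
      unfolding Gm_def dl_def by (rule pw_lemma[OF pol kerm])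
    also have "\<dots> = 0" using V_bell[OF stm gg, of f s] unfolding V_def by simp
    finally show ?thesis .
  qed
  have h_b: "\<bar>h s\<bar> \<le> 2 * ep * dm" for s
  proof -
    have "h s = (\<Sum>a\<in>UNIV. \<pi>' s a * Gm s a) - (\<Sum>a\<in>UNIV. \<pi> s a * Gm s a)"
      using sumGm[of s] by (simp add: h_def)
    also have "\<dots> = (\<Sum>a\<in>UNIV. (\<pi>' s a - \<pi> s a) * Gm s a)"
      by (simp add: sum_subtractf left_diff_distrib)
    also have "\<bar>\<dots>\<bar> \<le> 2 * dTV (\<pi>' s) (\<pi> s) * dm" by (rule tv_bound[OF Gm_b])
    also have "\<dots> \<le> 2 * ep * dm" unfolding ep_def using dm0 ep_ge by (intro mult_right_mono) auto
    finally show ?thesis .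
  qed
  have w_b: "\<bar>w s\<bar> \<le> 2 * ep * (2 * em * dm)" for s
  proof -
    have "(\<Sum>a\<in>UNIV. (\<pi>' s a - \<pi> s a) * (GP s a - Gm s a))
        = (\<Sum>a\<in>UNIV. \<pi>' s a * GP s a - \<pi>' s a * Gm s a - \<pi> s a * GP s a + \<pi> s a * Gm s a)"
      by (rule sum.cong) (auto simp: algebra_simps)
    also have "\<dots> = g' s - h s - g s + (\<Sum>a\<in>UNIV. \<pi> s a * Gm s a)"
      unfolding g'_def h_def g_def by (simp only: sum.distrib sum_subtractf)
    finally have "w s = (\<Sum>a\<in>UNIV. (\<pi>' s a - \<pi> s a) * (GP s a - Gm s a))"
      using sumGm[of s] by (simp add: w_def)
    also have "\<bar>\<dots>\<bar> \<le> 2 * dTV (\<pi>' s) (\<pi> s) * (2 * em * dm)" by (rule tv_bound[OF GPGm_b])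
    also have "\<dots> \<le> 2 * ep * (2 * em * dm)" unfolding ep_def using dm0 ep_ge em0
      by (intro mult_right_mono) auto
    finally show ?thesis .
  qed
  have g_b: "\<bar>g s\<bar> \<le> 2 * em * dm" for s
  proof -
    have "g s = (\<Sum>a\<in>UNIV. \<pi> s a * GP s a) - (\<Sum>a\<in>UNIV. \<pi> s a * Gm s a)"
      using sumGm[of s] by (simp add: g_def)
    also have "\<dots> = (\<Sum>a\<in>UNIV. \<pi> s a * (GP s a - Gm s a))"
      by (simp add: sum_subtractf right_diff_distrib)
    also have "\<bar>\<dots>\<bar> \<le> 2 * em * dm"
      using pol GPGm_b by (intro dist_avg_bound) (auto simp: is_policy_def)
    finally show ?thesis .
  qed
  have kd1: "(\<Sum>s'\<in>UNIV. \<bar>Kp \<pi>' P s s' - Kp \<pi> P s s'\<bar>) \<le> 2 * ep" for s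
  proof -
    have "(\<Sum>s'\<in>UNIV. \<bar>Kp \<pi>' P s s' - Kp \<pi> P s s'\<bar>) = (\<Sum>s'\<in>UNIV. \<bar>\<Sum>a\<in>UNIV. (\<pi>' s a - \<pi> s a) * P s a s'\<bar>)"
      by (simp add: Kp_def sum_subtractf left_diff_distrib)
    also have "\<dots> \<le> 2 * dTV (\<pi>' s) (\<pi> s)" by (rule kern_dist1[OF kerP])
    also have "\<dots> \<le> 2 * ep" unfolding ep_def using ep_ge by simp
    finally show ?thesis .
  qed
  have kdm: "(\<Sum>s'\<in>UNIV. \<bar>Kp \<pi>' P s s' - Kp \<pi> Pm s s'\<bar>) \<le> 2 * (ep + em)" for s
  proof -
    have pt: "\<bar>Kp \<pi>' P s s' - Kp \<pi> Pm s s'\<bar> \<le> \<bar>\<Sum>a\<in>UNIV. (\<pi>' s a - \<pi> s a) * P s a s'\<bar> + \<bar>\<Sum>a\<in>UNIV. \<pi> s a * (P s a s' - Pm s a s')\<bar>" for s'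
    proof -
      have "Kp \<pi>' P s s' - Kp \<pi> Pm s s' = (\<Sum>a\<in>UNIV. (\<pi>' s a - \<pi> s a) * P s a s') + (\<Sum>a\<in>UNIV. \<pi> s a * (P s a s' - Pm s a s'))"
        by (simp add: Kp_def sum_subtractf left_diff_distrib right_diff_distrib)
      then show ?thesis by (simp add: abs_triangle_ineq)
    qed
    have "(\<Sum>s'\<in>UNIV. \<bar>Kp \<pi>' P s s' - Kp \<pi> Pm s s'\<bar>) \<le> (\<Sum>s'\<in>UNIV. \<bar>\<Sum>a\<in>UNIV. (\<pi>' s a - \<pi> s a) * P s a s'\<bar> + \<bar>\<Sum>a\<in>UNIV. \<pi> s a * (P s a s' - Pm s a s')\<bar>)"
      by (rule sum_mono[OF pt])
    also have "\<dots> = (\<Sum>s'\<in>UNIV. \<bar>\<Sum>a\<in>UNIV. (\<pi>' s a - \<pi> s a) * P s a s'\<bar>) + (\<Sum>s'\<in>UNIV. \<bar>\<Sum>a\<in>UNIV. \<pi> s a * (P s a s' - Pm s a s')\<bar>)"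
      by (rule sum.distrib)
    also have "\<dots> \<le> 2 * dTV (\<pi>' s) (\<pi> s) + 2 * em"
      by (intro add_mono kern_dist1[OF kerP] kern_dist2[OF pol]) (simp add: em_def em_ge)
    also have "\<dots> \<le> 2 * (ep + em)" unfolding ep_def using ep_ge[of \<pi>' s \<pi>] by simp
    finally show ?thesis .
  qed
  have J1: "J \<gamma> f P \<mu> \<pi>' = (\<Sum>s\<in>UNIV. \<mu> s * V s) + occ \<gamma> (Kp \<pi>' P) \<mu> g'"
    unfolding J_eq telescope[OF pol' kerP gg, of \<mu> f V] g'_def GP_def dl_def ..
  have J0: "J \<gamma> f P \<mu> \<pi> = (\<Sum>s\<in>UNIV. \<mu> s * V s) + occ \<gamma> (Kp \<pi> P) \<mu> g"
    unfolding J_eq telescope[OF pol kerP gg, of \<mu> f V] g_def GP_def dl_def ..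
  have L: "Lsur \<gamma> f Pm \<mu> \<pi> \<pi>' = (1 - \<gamma>) * occ \<gamma> (Kp \<pi> Pm) \<mu> h"
  proof -
    have "Lsur \<gamma> f Pm \<mu> \<pi> \<pi>' = (\<Sum>s\<in>UNIV. (1 - \<gamma>) * (\<Sum>t. \<gamma> ^ t * mk (Kp \<pi> Pm) \<mu> t s) * h s)"
      unfolding Lsur_def h_def Af_eq dstate_eq[OF pol] ..
    also have "\<dots> = (1 - \<gamma>) * (\<Sum>s\<in>UNIV. \<Sum>t. \<gamma> ^ t * mk (Kp \<pi> Pm) \<mu> t s * h s)"
    proof -
      have "(\<Sum>t. \<gamma> ^ t * mk (Kp \<pi> Pm) \<mu> t s) * h s = (\<Sum>t. \<gamma> ^ t * mk (Kp \<pi> Pm) \<mu> t s * h s)" for s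
        using suminf_mult2[OF summable_mk[OF stm gg, of \<mu> s 1], of "h s"] by simp
      then show ?thesis by (simp add: sum_distrib_left mult.assoc)
    qed
    also have "(\<Sum>s\<in>UNIV. \<Sum>t. \<gamma> ^ t * mk (Kp \<pi> Pm) \<mu> t s * h s) = (\<Sum>t. \<Sum>s\<in>UNIV. \<gamma> ^ t * mk (Kp \<pi> Pm) \<mu> t s * h s)"
      by (rule suminf_sum[symmetric]) (rule summable_mk[OF stm gg])
    also have "\<dots> = occ \<gamma> (Kp \<pi> Pm) \<mu> h"
      unfolding occ_def by (simp add: sum_distrib_left mult.assoc)
    finally show ?thesis .
  qed
  have wdec: "occ \<gamma> (Kp \<pi>' P) \<mu> w = occ \<gamma> (Kp \<pi>' P) \<mu> g' - occ \<gamma> (Kp \<pi>' P) \<mu> h - occ \<gamma> (Kp \<pi>' P) \<mu> g"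
    unfolding w_def occ_diff[OF st1 gg, of \<mu> "\<lambda>s. g' s - h s" g] occ_diff[OF st1 gg] ..
  have b1: "\<bar>occ \<gamma> (Kp \<pi>' P) \<mu> h - occ \<gamma> (Kp \<pi> Pm) \<mu> h\<bar> \<le> 2 * (ep + em) * (2 * ep * dm) * (\<gamma> / (1 - \<gamma>)^2)"
    by (rule occ_diff_bound[OF st1 stm gg mud kdm h_b])
  have b2: "\<bar>occ \<gamma> (Kp \<pi>' P) \<mu> g - occ \<gamma> (Kp \<pi> P) \<mu> g\<bar> \<le> 2 * ep * (2 * em * dm) * (\<gamma> / (1 - \<gamma>)^2)"
    by (rule occ_diff_bound[OF st1 st0 gg mud kd1 g_b])
  have b3: "\<bar>occ \<gamma> (Kp \<pi>' P) \<mu> w\<bar> \<le> 2 * ep * (2 * em * dm) / (1 - \<gamma>)"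
    by (rule occ_bound[OF st1 gg mud w_b])
  have E: "2 * (ep + em) * (2 * ep * dm) * (\<gamma> / (1 - \<gamma>)^2) + 2 * ep * (2 * em * dm) / (1 - \<gamma>)
      + 2 * ep * (2 * em * dm) * (\<gamma> / (1 - \<gamma>)^2) = 4 * dm * eps_total \<gamma> ep em / (1 - \<gamma>)"
  proof -
    have q: "\<gamma> / (1 - \<gamma>)^2 = (\<gamma> / (1 - \<gamma>)) / (1 - \<gamma>)" by (simp add: power2_eq_square)
    define Q where "Q = \<gamma> / (1 - \<gamma>)"
    define d where "d = 1 - \<gamma>"
    have d0: "d \<noteq> 0" using gg by (simp add: d_def)
    have "2 * (ep + em) * (2 * ep * dm) * (Q / d) + 2 * ep * (2 * em * dm) / d
      + 2 * ep * (2 * em * dm) * (Q / d) = 4 * dm * (ep * em + Q * (ep\<^sup>2 + 2 * ep * em)) / d"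
      using d0 by (simp add: field_simps power2_eq_square)
    then show ?thesis unfolding q eps_total_def Q_def d_def .
  qed
  have Ld: "Lsur \<gamma> f Pm \<mu> \<pi> \<pi>' / (1 - \<gamma>) = occ \<gamma> (Kp \<pi> Pm) \<mu> h"
    unfolding L using gg by simp
  have dJ: "J \<gamma> f P \<mu> \<pi>' - J \<gamma> f P \<mu> \<pi> - Lsur \<gamma> f Pm \<mu> \<pi> \<pi>' / (1 - \<gamma>)
     = (occ \<gamma> (Kp \<pi>' P) \<mu> h - occ \<gamma> (Kp \<pi> Pm) \<mu> h) + occ \<gamma> (Kp \<pi>' P) \<mu> w
       + (occ \<gamma> (Kp \<pi>' P) \<mu> g - occ \<gamma> (Kp \<pi> P) \<mu> g)"
    unfolding J1 J0 Ld wdec by simp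
  have "\<bar>J \<gamma> f P \<mu> \<pi>' - J \<gamma> f P \<mu> \<pi> - Lsur \<gamma> f Pm \<mu> \<pi> \<pi>' / (1 - \<gamma>)\<bar> \<le> 4 * dm * eps_total \<gamma> ep em / (1 - \<gamma>)"
    unfolding dJ E[symmetric] using b1 b2 b3 by linarith
  then show "let eps = eps_total \<gamma> (eps_pi \<pi> \<pi>') (eps_m P Pm);
          L = Lsur \<gamma> f Pm \<mu> \<pi> \<pi>';
          dm = delta_max \<gamma> f Pm \<pi>;
          dJ = J \<gamma> f P \<mu> \<pi>' - J \<gamma> f P \<mu> \<pi>
      in L / (1 - \<gamma>) - 4 * dm * eps / (1 - \<gamma>) \<le> dJ
       \<and> dJ \<le> L / (1 - \<gamma>) + 4 * dm * eps / (1 - \<gamma>)"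
    unfolding Let_def ep_def em_def dm_def by linarith
qed

end
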